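(* Let $\Pi_n$ be the graph on $[n+1]$ with edge multiset $\{(i,i+1),(i,n+1): i=1,\ldots,n\}$ (so $(n,n+1)$ appears twice), and let ${\bf a}=(a_1,\ldots,a_n,-\sum a_i)$ with $a_i\in\mathbb{Z}_{>0}$. The number of types of cells of the canonical subdivision of $\mathcal{F}_{\Pi_n}({\bf a})$ is the Catalan number $C_n=\frac{1}{n+1}\binom{2n}{n}$.
   Context: $\mathcal{F}_H({\bf a})$ is the set of $f\in\mathbb{R}_{\ge0}^{E(H)}$ with outflow minus inflow at each vertex $k\le n$ equal to $a_k$. Noncrossing trees: for ordered lists $L=(x_1,\ldots,x_\ell)$, $R=(y_1,\ldots,y_r)$, $\mathcal{T}_{L,R}$ is the set of trees on $L\sqcup R$ with all edges between $L$ and $R$ and no two edges $(x_p,y_q),(x_t,y_u)$ with $p<t$, $q>u$. Compounded reduction at vertex $i\in\{2,\ldots,n\}$ of a graph $H$ in which $i$ has incoming edges (here $a_i>0$): with $\mathcal{I}_i(H)$, $\mathcal{O}_i(H)$ the multisets of edges $(\cdot,i)$, $(i,\cdot)$ in fixed orderings, $L=(\mathcal{I}_i(H),v_i)$ ($v_i$ a new symbol, last), $R=\mathcal{O}_i(H)$; for $T\in\mathcal{T}_{L,R}$, $H^{(i)}_T$ is $H$ with $\mathcal{I}_i(H)\cup\mathcal{O}_i(H)$ deleted and, for each tree edge, an edge $(r,s)$ added if it joins $(r,i)$ and $(i,s)$, or an edge $(i,s)$ if it joins $v_i$ and $(i,s)$. Each new edge is a formal sum of original edges (summands of the two joined edges,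 resp. of $(i,s)$), and $\mathcal{F}_H({\bf a})$ is identified with its image in the original edge space under $g\mapsto f$, $f(e)=\sum g(e')$ over edges $e'$ having $e$ as summand. Canonical compounded reduction tree: root the original graph; for $i=n,\ldots,2$ in order, every current leaf $H$ in which $i$ has incoming edges gets the children $H^{(i)}_T$, $T\in\mathcal{T}_{L,R}$. The canonical subdivision consists of the polytopes $\mathcal{F}_H({\bf a})$, one per leaf $H$ (the cells); two cells are of the same type if their leaf graphs are identical multigraphs. *)

theory Defs
  imports Complex_Main "HOL-Library.Multiset" "HOL-Library.Product_Lexorder"
begin

text \<open>Types of cells are determined by the leaf graphs as multigraphs, so we only
  track the multigraphs (not the formal-sum bookkeeping of edges).\<close>

type_synonym graph = "(nat \<times> nat) multiset"

definition incoming :: "graph \<Rightarrow> nat \<Rightarrow> graph" where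
  "incoming H i = filter_mset (\<lambda>e. snd e = i) H"

definition outgoing :: "graph \<Rightarrow> nat \<Rightarrow> graph" where
  "outgoing H i = filter_mset (\<lambda>e. fst e = i) H"

definition bip_rel :: "(nat \<times> nat) set \<Rightarrow> ((nat + nat) \<times> (nat + nat)) set" where
  "bip_rel T = {(Inl p, Inr q) | p q. (p, q) \<in> T} \<union> {(Inr q, Inl p) | p q. (p, q) \<in> T}"

definition is_bip_tree :: "nat \<Rightarrow> nat \<Rightarrow> (nat \<times> nat) set \<Rightarrow> bool" where
  "is_bip_tree l r T \<longleftrightarrow>
     T \<subseteq> {..<l} \<times> {..<r} \<and> card T + 1 = l + r \<and>
     (\<forall>u \<in> Inl ` {..<l} \<union> Inr ` {..<r}. \<forall>w \<in> Inl ` {..<l} \<union> Inr ` {..<r}.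
        (u, w) \<in> (bip_rel T)\<^sup>*)"

definition noncrossing_trees :: "nat \<Rightarrow> nat \<Rightarrow> (nat \<times> nat) set set" where
  "noncrossing_trees l r = {T. is_bip_tree l r T \<and>
     (\<forall>(p, q) \<in> T. \<forall>(t, u) \<in> T. \<not> (p < t \<and> q > u))}"

text \<open>Compounded reduction at vertex i along the noncrossing tree T.
  L = (incoming edges in sorted order, v_i), where v_i has index length Lin;
  R = outgoing edges in sorted order.\<close>

definition Lin :: "graph \<Rightarrow> nat \<Rightarrow> (nat \<times> nat) list" where
  "Lin H i = sorted_list_of_multiset (incoming H i)"

definition Rout :: "graph \<Rightarrow> nat \<Rightarrow> (nat \<times> nat) list" where
  "Rout H i = sorted_list_of_multiset (outgoing H i)"

definition reduce :: "graph \<Rightarrow> nat \<Rightarrow> (nat \<times> nat) set \<Rightarrow> graph" where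
  "reduce H i T =
     (H - incoming H i - outgoing H i) +
     sum (\<lambda>(p, q). {# (if p < length (Lin H i) then fst (Lin H i ! p) else i,
                        snd (Rout H i ! q)) #}) T"

definition children :: "graph \<Rightarrow> nat \<Rightarrow> graph set" where
  "children H i = reduce H i ` noncrossing_trees (length (Lin H i) + 1) (length (Rout H i))"

definition reduce_layer :: "nat \<Rightarrow> graph set \<Rightarrow> graph set" where
  "reduce_layer i S = (\<Union>H \<in> S. if incoming H i \<noteq> {#} \<and> children H i \<noteq> {}
                                then children H i else {H})"

fun reduce_down :: "nat \<Rightarrow> graph set \<Rightarrow> graph set" where
  "reduce_down 0 S = S"
| "reduce_down (Suc k) S = (if Suc k < 2 then S else reduce_down k (reduce_layer (Suc k) S))"

definition canonical_leaf_graphs :: "nat \<Rightarrow> graph \<Rightarrow> graph set" where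
  "canonical_leaf_graphs n G = reduce_down n {G}"

definition Pi_graph :: "nat \<Rightarrow> graph" where
  "Pi_graph n = mset (map (\<lambda>i. (i, i + 1)) [1..<n + 1]) + mset (map (\<lambda>i. (i, n + 1)) [1..<n + 1])"

end

theory Submission
  imports Defs
begin

fun Nf :: "nat \<Rightarrow> nat \<Rightarrow> nat" where
  "Nf 0 x = 1" | "Nf (Suc m) x = (\<Sum>s=2..x+1. Nf m s)"

lemma Nf_zero: "Nf (Suc m) 0 = 0" by simp
lemma Nf_step: "Nf (Suc m) (Suc x) = Nf (Suc m) x + Nf m (x+2)"
  by (simp add: sum.cl_ivl_Suc Nf.simps(2))

declare Nf.simps(2)[simp del]
declare binomial_Suc_Suc[simp del]
lemma Nf_closed: "Nf (Suc k) x + ((x+2*k+1) choose k) = ((x+2*k+1) choose Suc k)"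
proof (induction k arbitrary: x)
  case 0
  then show ?case by (simp add: Nf.simps(2))
next
  case (Suc k)
  note IHk = Suc.IH
  show ?case
  proof (induction x)
    case 0
    have "(2*k+3) choose (k+1) = (2*k+3) choose (2*k+3 - (k+1))"
      by (rule binomial_symmetric) simp
    moreover have "2*k+3 - (k+1) = Suc (Suc k)" by simp
    ultimately show ?case by (simp add: Nf_zero numeral_eq_Suc)
  next
    case (Suc x)
    define N where "N = x+2*k+3"
    have eqg: "Suc x + 2 * Suc k + 1 = Suc N" unfolding N_def by simp
    have k: "Nf (Suc k) (x+2) + (N choose k) = (N choose Suc k)"
    proof -
      have eq: "x+2+2*k+1 = N" unfolding N_def by simp
      show ?thesis using IHk[of "x+2"] by (simp only: eq)
    qed
    have p1: "Suc N choose Suc k = (N choose k) + (N choose Suc k)"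
      by (rule binomial_Suc_Suc)
    have p2: "Suc N choose Suc (Suc k) = (N choose Suc k) + (N choose Suc (Suc k))"
      by (rule binomial_Suc_Suc)
    have ih: "Nf (Suc (Suc k)) x + (N choose (Suc k)) = (N choose (Suc (Suc k)))"
    proof -
      have eq: "x + 2 * Suc k + 1 = N" unfolding N_def by simp
      show ?thesis using Suc.IH by (simp only: eq)
    qed
    have st: "Nf (Suc (Suc k)) (Suc x) = Nf (Suc (Suc k)) x + Nf (Suc k) (x+2)"
      by (rule Nf_step)
    show ?case unfolding eqg using k p1 p2 ih st by linarith
  qed
qed

lemma aux_real: "(x::real) + y = z \<Longrightarrow> z + K*z = K*y + 3*y \<Longrightarrow> K*x+3*x = 2*z"
proof -
  assume h1: "x + y = z" and h2: "z + K*z = K*y + 3*y"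
  have xe: "x = z - y" using h1 by simp
  have "K*x+3*x = K*z - K*y + 3*z - 3*y" unfolding xe by (simp add: algebra_simps)
  then show ?thesis using h2 by linarith
qed

lemma Nf_catalan:
  assumes "n \<ge> 1"
  shows "real (Nf (n-1) 2) = real ((2 * n) choose n) / real (n + 1)"
proof (cases "n = 1")
  case True then show ?thesis by simp
next
  case False
  then obtain k where n: "n = k + 2" using assms by (metis add.commute le_Suc_ex Suc_1 add_Suc_right le_antisym not_less_eq_eq one_add_one plus_1_eq_Suc)
  have c: "Nf (Suc k) 2 + ((2*k+3) choose k) = ((2*k+3) choose Suc k)"
  proof -
      have eq: "2+2*k+1 = 2*k+3" by simp
      show ?thesis using Nf_closed[of k 2] by (simp only: eq)
    qed
  have a: "((2*k+3) choose Suc k) * (k+1) = ((2*k+3) choose k) * (k+3)"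
  proof -
    have "2*k+3 = Suc (k + Suc (Suc k))" by simp
    then show ?thesis using Suc_times_binomial_add[of k "Suc (Suc k)"]
      by (simp only: mult.commute) (simp add: algebra_simps)
  qed
  have s: "(2*k+3) choose (k+2) = (2*k+3) choose (k+1)"
  proof -
    have "(2*k+3) choose (k+1) = (2*k+3) choose (2*k+3 - (k+1))"
      by (rule binomial_symmetric) simp
    moreover have "2*k+3 - (k+1) = k+2" by simp
    ultimately show ?thesis by simp
  qed
  have p: "(2*k+4) choose (k+2) = ((2*k+3) choose (k+2)) + ((2*k+3) choose (k+1))"
    using binomial_Suc_Suc[of "2*k+3" "k+1"] by (simp add: algebra_simps)
  have "real (Nf (n-1) 2) * (n+1) = real ((2 * n) choose n)"
  proof -
    have e1: "real (Nf (Suc k) 2) = real ((2*k+3) choose Suc k) - real ((2*k+3) choose k)"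
      using c by (metis add_diff_cancel_right' of_nat_add)
    have e2: "real ((2*k+3) choose Suc k) * (k+1) = real ((2*k+3) choose k) * (k+3)"
      using a by (metis of_nat_mult of_nat_add of_nat_numeral of_nat_1)
    have e3: "real ((2*n) choose n) = 2 * real ((2*k+3) choose Suc k)"
    proof -
      define M where "M = 2*k+3"
      have q1: "2*n = Suc M" "n = Suc (Suc k)" using n unfolding M_def by simp_all
      have pp: "Suc M choose Suc (Suc k) = (M choose Suc k) + (M choose Suc (Suc k))"
        by (rule binomial_Suc_Suc)
      have ss: "M choose Suc (Suc k) = M choose Suc k"
        using s unfolding M_def by simp
      have "(2*n) choose n = 2 * (M choose Suc k)"
        by (subst q1(1), subst q1(2), simp only: pp ss mult_2)
      then have "(2*n) choose n = 2 * ((2*k+3) choose Suc k)" unfolding M_def .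
      then show ?thesis by simp
    qed
    have e4: "real (Nf (Suc k) 2) * (real k + 3) = 2 * real ((2*k+3) choose Suc k)"
      using aux_real[OF c[THEN arg_cong[where f=real], unfolded of_nat_add], of "real k"] a[THEN arg_cong[where f=real]]
      by (simp add: algebra_simps)
    have e5: "n - 1 = Suc k" "real n = real k + 2" using n by simp_all
    show ?thesis by (subst e5(1)) (use e4 e3 e5(2) in \<open>simp add: algebra_simps\<close>)
  qed
  then show ?thesis by (simp add: field_simps)
qed


definition Gr :: "nat \<Rightarrow> nat \<Rightarrow> (nat \<Rightarrow> nat) \<Rightarrow> graph" where
  "Gr n i c = mset (map (\<lambda>j. (j, j+1)) [1..<i]) + (\<Sum>j\<in>{1..n}. replicate_mset (c j) (j, n+1))"

lemma count_path: "count (mset (map (\<lambda>j. (j, j+1)) [1..<i])) (a,b) = (if b = a+1 \<and> 1 \<le> a \<and> a < i then 1 else 0)"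
proof -
  have d: "distinct (map (\<lambda>j. (j, j+1)) [1..<i])" by (simp add: distinct_map inj_on_def)
  show ?thesis using d[unfolded distinct_count_atmost_1] by auto
qed

lemma count_star: "count (\<Sum>j\<in>{1..n::nat}. replicate_mset (c j) (j, m)) (a,b) = (if b = m \<and> 1 \<le> a \<and> a \<le> n then c a else 0)"
by (auto simp: count_sum)

lemma count_Gr: "count (Gr n i c) (a,b) = (if b = a+1 \<and> 1 \<le> a \<and> a < i then 1 else 0) + (if b = n+1 \<and> 1 \<le> a \<and> a \<le> n then c a else 0)"
  unfolding Gr_def by (simp only: count_union count_path count_star)

lemma inc_Gr: "2 \<le> i \<Longrightarrow> i \<le> n \<Longrightarrow> incoming (Gr n i c) i = {#(i-1, i)#}"
  unfolding multiset_eq_iff incoming_def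
  by (auto simp: count_Gr)

lemma out_Gr: "1 \<le> i \<Longrightarrow> i \<le> n \<Longrightarrow> outgoing (Gr n i c) i = replicate_mset (c i) (i, n+1)"
  unfolding multiset_eq_iff outgoing_def
  by (auto simp: count_Gr)

lemma rest_Gr: "2 \<le> i \<Longrightarrow> i \<le> n \<Longrightarrow>
   Gr n i c - incoming (Gr n i c) i - outgoing (Gr n i c) i = Gr n (i-1) (c(i:=0))"
  unfolding multiset_eq_iff incoming_def outgoing_def
  by (auto simp: count_Gr)

lemma Lin_Gr: "2 \<le> i \<Longrightarrow> i \<le> n \<Longrightarrow> Lin (Gr n i c) i = [(i-1,i)]"
  unfolding Lin_def using inc_Gr by simp

lemma Rout_Gr: "1 \<le> i \<Longrightarrow> i \<le> n \<Longrightarrow> Rout (Gr n i c) i = replicate (c i) (i, n+1)"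
proof -
  assume a: "1 \<le> i" "i \<le> n"
  have "replicate_mset (c i) (i, n+1) = mset (replicate (c i) (i, n+1))" by simp
  then show ?thesis unfolding Rout_def out_Gr[OF a, of c]
    by (simp only: sorted_list_of_multiset_mset) (simp add: sorted_sort_id)
qed

lemma count_sum_single: "finite T \<Longrightarrow> count (\<Sum>x\<in>T. {#f x#}) e = card {x\<in>T. f x = e}"
  by (simp add: count_sum sum.If_cases Int_def conj_commute)

lemma reduce_Gr:
  assumes i: "2 \<le> i" "i \<le> n" and T: "T \<subseteq> {..<2} \<times> {..<c i}"
  shows "reduce (Gr n i c) i T = Gr n (i-1) (c(i := card {x\<in>T. \<not> fst x < 1}, i-1 := c (i-1) + card {x\<in>T. fst x < 1}))"
proof -
  have fin: "finite T" using T finite_subset by blast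
  have s: "(\<Sum>(p, q)\<in>T. {# (if p < length (Lin (Gr n i c) i) then fst (Lin (Gr n i c) i ! p) else i,
                        snd (Rout (Gr n i c) i ! q)) #}) = (\<Sum>x\<in>T. {#(if fst x < 1 then i-1 else i, n+1)#})"
  proof (rule sum.cong)
    fix x assume "x \<in> T"
    then obtain p q where x: "x = (p,q)" "q < c i" using T by auto
    show "(case x of (p, q) \<Rightarrow> {# (if p < length (Lin (Gr n i c) i) then fst (Lin (Gr n i c) i ! p) else i,
                        snd (Rout (Gr n i c) i ! q)) #}) = {#(if fst x < 1 then i-1 else i, n+1)#}"
      using x i by (simp add: Lin_Gr Rout_Gr)
  qed simp
  have c: "count (\<Sum>x\<in>T. {#(if fst x < 1 then i-1 else i, n+1)#}) (a,b) =
     (if b = n+1 \<and> a = i - 1 then card {x\<in>T. fst x < 1} else if b = n+1 \<and> a = i then card {x\<in>T. \<not> fst x < 1} else 0)" for a b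
  proof -
    have "count (\<Sum>x\<in>T. {#(if fst x < 1 then i-1 else i, n+1)#}) (a,b) = card {x\<in>T. (if fst x < 1 then i-1 else i, n+1) = (a,b)}"
      by (rule count_sum_single[OF fin])
    also have "\<dots> = (if b = n+1 \<and> a = i - 1 then card {x\<in>T. fst x < 1} else if b = n+1 \<and> a = i then card {x\<in>T. \<not> fst x < 1} else 0)"
    proof -
      have "{x\<in>T. (if fst x < 1 then i-1 else i, n+1) = (a,b)} =
        (if b = n+1 \<and> a = i - 1 then {x\<in>T. fst x < 1} else if b = n+1 \<and> a = i then {x\<in>T. \<not> fst x < 1} else {})"
        using i by auto
      then show ?thesis by simp
    qed
    finally show ?thesis .
  qed
  show ?thesis
    unfolding reduce_def rest_Gr[OF i] s multiset_eq_iff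
  proof
    fix e :: "nat \<times> nat"
    obtain a b where e: "e = (a,b)" by fastforce
    show "count (Gr n (i - 1) (c(i := 0)) + (\<Sum>x\<in>T. {#(if fst x < 1 then i - 1 else i, n + 1)#})) e =
         count (Gr n (i - 1) (c(i := card {x \<in> T. \<not> fst x < 1}, i - 1 := c (i - 1) + card {x \<in> T. fst x < 1}))) e"
      unfolding e count_union c count_Gr using i by auto
  qed
qed



lemma into_Inl:
  assumes "(u, Inl p) \<in> (bip_rel T)\<^sup>*" "u \<noteq> Inl p"
  shows "\<exists>q. (p,q) \<in> T"
  using assms
proof (cases rule: rtranclE)
  case (step y)
  then show ?thesis unfolding bip_rel_def by auto
qed simp

lemma tree_props:
  assumes T: "T \<in> noncrossing_trees 2 r" and r: "r \<ge> 1"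
  shows "T \<subseteq> {..<2}\<times>{..<r}" "card {x\<in>T. fst x<1} \<ge> 1" "card {x\<in>T. \<not> fst x < 1} \<ge> 1"
    "card {x\<in>T. fst x<1} + card {x\<in>T. \<not>fst x<1} = r+1"
proof -
  have bt: "is_bip_tree 2 r T" using T unfolding noncrossing_trees_def by simp
  show sub: "T \<subseteq> {..<2}\<times>{..<r}" using bt unfolding is_bip_tree_def by simp
  have fin: "finite T" using sub finite_subset by blast
  have cT: "card T = r + 1" using bt unfolding is_bip_tree_def by simp
  have conn: "\<And>u w. u \<in> Inl ` {..<2} \<union> Inr ` {..<r} \<Longrightarrow> w \<in> Inl ` {..<2} \<union> Inr ` {..<r} \<Longrightarrow> (u, w) \<in> (bip_rel T)\<^sup>*"
    using bt unfolding is_bip_tree_def by blast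
  have "(Inr 0, Inl 0) \<in> (bip_rel T)\<^sup>*" using r by (intro conn) auto
  then obtain q where q: "(0,q) \<in> T" using into_Inl by blast
  have "(Inr 0, Inl 1) \<in> (bip_rel T)\<^sup>*" using r by (intro conn) auto
  then obtain q' where q': "(1,q') \<in> T" using into_Inl by blast
  show "card {x\<in>T. fst x<1} \<ge> 1"
  proof -
    have "(0,q) \<in> {x\<in>T. fst x<1}" using q by simp
    moreover have "finite {x\<in>T. fst x<1}" using fin by simp
    ultimately show ?thesis by (metis One_nat_def Suc_leI card_gt_0_iff empty_iff)
  qed
  show "card {x\<in>T. \<not> fst x<1} \<ge> 1"
  proof -
    have "(1,q') \<in> {x\<in>T. \<not> fst x<1}" using q' by simp
    moreover have "finite {x\<in>T. \<not> fst x<1}" using fin by simp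
    ultimately show ?thesis by (metis One_nat_def Suc_leI card_gt_0_iff empty_iff)
  qed
  have "card {x\<in>T. fst x<1} + card {x\<in>T. \<not>fst x<1} = card ({x\<in>T. fst x<1} \<union> {x\<in>T. \<not>fst x<1})"
    by (rule card_Un_disjoint[symmetric]) (use fin in auto)
  also have "{x\<in>T. fst x<1} \<union> {x\<in>T. \<not>fst x<1} = T" by auto
  finally show "card {x\<in>T. fst x<1} + card {x\<in>T. \<not>fst x<1} = r+1" using cT by simp
qed

definition Tk :: "nat \<Rightarrow> nat \<Rightarrow> (nat \<times> nat) set" where
  "Tk a r = (\<lambda>q. (0,q)) ` {..<a} \<union> (\<lambda>q. (1,q)) ` {a-1..<r}"

lemma Tk_props:
  assumes a: "1 \<le> a" "a \<le> r"
  shows "Tk a r \<in> noncrossing_trees 2 r" "card {x\<in>Tk a r. fst x<1} = a" "card {x\<in>Tk a r. \<not> fst x<1} = r + 1 - a"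
proof -
  have f0: "{x\<in>Tk a r. fst x<1} = (\<lambda>q. (0,q)) ` {..<a}" unfolding Tk_def by auto
  have f1: "{x\<in>Tk a r. \<not> fst x<1} = (\<lambda>q. (1,q)) ` {a-1..<r}" unfolding Tk_def by auto
  show c0: "card {x\<in>Tk a r. fst x<1} = a" unfolding f0 by (subst card_image) (auto simp: inj_on_def)
  show c1: "card {x\<in>Tk a r. \<not> fst x<1} = r + 1 - a" unfolding f1 using a by (subst card_image) (auto simp: inj_on_def)
  have finTk: "finite (Tk a r)" unfolding Tk_def by simp
  have cT: "card (Tk a r) = r + 1"
  proof -
    have "card (Tk a r) = card ({x\<in>Tk a r. fst x<1} \<union> {x\<in>Tk a r. \<not>fst x<1})" by (rule arg_cong[where f=card]) auto
    also have "\<dots> = card {x\<in>Tk a r. fst x<1} + card {x\<in>Tk a r. \<not>fst x<1}"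
      by (rule card_Un_disjoint) (use finTk in auto)
    finally show ?thesis using c0 c1 a by simp
  qed
  have sub: "Tk a r \<subseteq> {..<2} \<times> {..<r}" unfolding Tk_def using a by auto
  let ?R = "(bip_rel (Tk a r))\<^sup>*"
  have sym: "(u,w) \<in> bip_rel (Tk a r) \<Longrightarrow> (w,u) \<in> bip_rel (Tk a r)" for u w
    unfolding bip_rel_def by auto
  have to0: "(u, Inl 0) \<in> ?R \<and> (Inl 0, u) \<in> ?R" if "u \<in> Inl ` {..<2} \<union> Inr ` {..<r}" for u
  proof -
    have e0: "(Inl 0, Inr q) \<in> bip_rel (Tk a r) \<and> (Inr q, Inl 0) \<in> bip_rel (Tk a r)" if "q < a" for q
      using that unfolding bip_rel_def Tk_def by auto
    have e1: "(Inl 1, Inr q) \<in> bip_rel (Tk a r) \<and> (Inr q, Inl 1) \<in> bip_rel (Tk a r)" if "a - 1 \<le> q" "q < r" for q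
      using that unfolding bip_rel_def Tk_def by auto
    have l1: "(Inl 1, Inl 0) \<in> ?R \<and> (Inl 0, Inl 1) \<in> ?R"
    proof -
      have "a - 1 < a" using a by simp
      then have x: "(Inl 0, Inr (a-1)) \<in> bip_rel (Tk a r) \<and> (Inr (a-1), Inl 0) \<in> bip_rel (Tk a r)" using e0 by blast
      have y: "(Inl 1, Inr (a-1)) \<in> bip_rel (Tk a r) \<and> (Inr (a-1), Inl 1) \<in> bip_rel (Tk a r)" using e1 a by simp
      show ?thesis using x y by (meson converse_rtrancl_into_rtrancl r_into_rtrancl)
    qed
    show ?thesis
    proof (cases u)
      case (Inl p)
      then have "p = 0 \<or> p = 1" using that by auto
      then show ?thesis using Inl l1 by auto
    next
      case (Inr q)
      then have q: "q < r" using that by auto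
      show ?thesis
      proof (cases "q < a")
        case True then show ?thesis using Inr e0 by blast
      next
        case False
        then have "a - 1 \<le> q" by simp
        then have "(Inl 1, Inr q) \<in> bip_rel (Tk a r) \<and> (Inr q, Inl 1) \<in> bip_rel (Tk a r)" using e1 q by blast
        then show ?thesis using Inr l1 by (meson converse_rtrancl_into_rtrancl rtrancl_into_rtrancl r_into_rtrancl)
      qed
    qed
  qed
  have bt: "is_bip_tree 2 r (Tk a r)"
    unfolding is_bip_tree_def
  proof (intro conjI ballI)
    show "Tk a r \<subseteq> {..<2} \<times> {..<r}" by (rule sub)
    show "card (Tk a r) + 1 = 2 + r" using cT by simp
    fix u w :: "nat + nat" assume "u \<in> Inl ` {..<2} \<union> Inr ` {..<r}" "w \<in> Inl ` {..<2} \<union> Inr ` {..<r}"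
    then have "(u, Inl 0) \<in> ?R" "(Inl 0, w) \<in> ?R" using to0 by blast+
    then show "(u, w) \<in> ?R" by (rule rtrancl_trans)
  qed
  have nc: "\<forall>(p, q) \<in> Tk a r. \<forall>(t, u) \<in> Tk a r. \<not> (p < t \<and> q > u)"
  proof (clarify)
    fix p q t u assume h: "(p,q)\<in>Tk a r" "(t,u)\<in>Tk a r" "p<t" "u<q"
    then have "p = 0" "t = 1" unfolding Tk_def by auto
    then have "q < a" "a - 1 \<le> u" using h(1,2) unfolding Tk_def by auto
    then show False using h(4) by simp
  qed
  show "Tk a r \<in> noncrossing_trees 2 r" unfolding noncrossing_trees_def using bt nc by simp
qed



lemma children_Gr:
  assumes i: "2 \<le> i" "i \<le> n" and ci: "1 \<le> c i"
  shows "children (Gr n i c) i = (\<lambda>t. Gr n (i-1) (c(i:=t, i-1 := c(i-1) + c i + 1 - t))) ` {1..c i}"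
proof -
  have ch: "children (Gr n i c) i = reduce (Gr n i c) i ` noncrossing_trees 2 (c i)"
    unfolding children_def using i by (simp add: Lin_Gr Rout_Gr numeral_2_eq_2)
  show ?thesis unfolding ch
  proof (intro equalityI subsetI)
    fix H assume "H \<in> reduce (Gr n i c) i ` noncrossing_trees 2 (c i)"
    then obtain T where T: "T \<in> noncrossing_trees 2 (c i)" and H: "H = reduce (Gr n i c) i T" by blast
    note tp = tree_props[OF T ci]
    define t where "t = card {x\<in>T. \<not> fst x < 1}"
    have t: "t \<in> {1..c i}" "c (i-1) + card {x\<in>T. fst x < 1} = c(i-1) + c i + 1 - t"
      using tp unfolding t_def by auto
    have "H = Gr n (i-1) (c(i:=t, i-1 := c(i-1) + card {x\<in>T. fst x < 1}))"
      unfolding H reduce_Gr[where i=i and n=n and c=c and T=T, OF i tp(1)] t_def ..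
    then have "H = Gr n (i-1) (c(i:=t, i-1 := c(i-1) + c i + 1 - t))" unfolding t(2) .
    then show "H \<in> (\<lambda>t. Gr n (i-1) (c(i:=t, i-1 := c(i-1) + c i + 1 - t))) ` {1..c i}"
      using t(1) by blast
  next
    fix H assume "H \<in> (\<lambda>t. Gr n (i-1) (c(i:=t, i-1 := c(i-1) + c i + 1 - t))) ` {1..c i}"
    then obtain t where t: "t \<in> {1..c i}" and H: "H = Gr n (i-1) (c(i:=t, i-1 := c(i-1) + c i + 1 - t))" by blast
    define a where "a = c i + 1 - t"
    have a: "1 \<le> a" "a \<le> c i" using t unfolding a_def by auto
    note tk = Tk_props[OF a]
    note tp = tree_props[OF tk(1) ci]
    have e1: "card {x\<in>Tk a (c i). \<not> fst x < 1} = t" using tk(3) t unfolding a_def by auto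
    have e2: "c (i-1) + card {x\<in>Tk a (c i). fst x < 1} = c(i-1) + c i + 1 - t" using tk(2) t unfolding a_def by auto
    have "H = reduce (Gr n i c) i (Tk a (c i))"
      unfolding H reduce_Gr[where i=i and n=n and c=c and T="Tk a (c i)", OF i tp(1)] e1 e2 ..
    then show "H \<in> reduce (Gr n i c) i ` noncrossing_trees 2 (c i)" using tk(1) by blast
  qed
qed

lemma rd_one: "reduce_down (Suc 0) S = S" by simp
lemma rd_Suc: "2 \<le> Suc k \<Longrightarrow> reduce_down (Suc k) S = reduce_down k (reduce_layer (Suc k) S)" by simp

lemma reduce_layer_single: "reduce_layer i S = (\<Union>H\<in>S. reduce_layer i {H})"
  unfolding reduce_layer_def by auto

lemma reduce_down_distrib: "reduce_down k S = (\<Union>H\<in>S. reduce_down k {H})"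
proof (induction k arbitrary: S)
  case 0
  then show ?case by simp
next
  case (Suc k)
  show ?case
  proof (cases "Suc k < 2")
    case True then show ?thesis by simp
  next
    case False
    have "reduce_down (Suc k) S = reduce_down k (reduce_layer (Suc k) S)" using False by simp
    also have "\<dots> = (\<Union>H'\<in>reduce_layer (Suc k) S. reduce_down k {H'})" by (rule Suc.IH)
    also have "\<dots> = (\<Union>H\<in>S. \<Union>H'\<in>reduce_layer (Suc k) {H}. reduce_down k {H'})"
      by (subst reduce_layer_single) auto
    also have "\<dots> = (\<Union>H\<in>S. reduce_down k (reduce_layer (Suc k) {H}))"
      by (rule SUP_cong[OF refl], rule Suc.IH[symmetric])
    also have "\<dots> = (\<Union>H\<in>S. reduce_down (Suc k) {H})" using False by simp
    finally show ?thesis .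
  qed
qed

declare reduce_down.simps(2)[simp del]

lemma main_ind:
  "Suc k \<le> n \<Longrightarrow> 1 \<le> c (Suc k) \<Longrightarrow> (\<forall>j. 1 \<le> j \<and> j \<le> k \<longrightarrow> c j = 1) \<Longrightarrow>
   finite (reduce_down (Suc k) {Gr n (Suc k) c}) \<and>
   card (reduce_down (Suc k) {Gr n (Suc k) c}) = Nf k (c (Suc k)) \<and>
   (\<forall>H \<in> reduce_down (Suc k) {Gr n (Suc k) c}. \<forall>j. Suc k < j \<and> j \<le> n \<longrightarrow> count H (j, n+1) = c j)"
proof (induction k arbitrary: c)
  case 0
  have "reduce_down (Suc 0) {Gr n (Suc 0) c} = {Gr n (Suc 0) c}" by (rule rd_one)
  then show ?case by (simp add: count_Gr)
next
  case (Suc k)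
  define i where "i = Suc (Suc k)"
  have i: "2 \<le> i" "i \<le> n" "1 \<le> c i" using Suc.prems unfolding i_def by auto
  define F where "F t = c(i:=t, Suc k := c(Suc k) + c i + 1 - t)" for t
  have ck: "c (Suc k) = 1" using Suc.prems by auto
  have ch: "children (Gr n i c) i = (\<lambda>t. Gr n (Suc k) (F t)) ` {1..c i}"
    using children_Gr[of i n c, OF i] unfolding F_def i_def by simp
  have inc: "incoming (Gr n i c) i \<noteq> {#}" using inc_Gr[OF i(1,2)] by simp
  have chne: "children (Gr n i c) i \<noteq> {}" using ch i(3) by auto
  have rl: "reduce_layer i {Gr n i c} = (\<lambda>t. Gr n (Suc k) (F t)) ` {1..c i}"
    unfolding reduce_layer_def using inc chne ch by simp
  have rd: "reduce_down i {Gr n i c} = (\<Union>t\<in>{1..c i}. reduce_down (Suc k) {Gr n (Suc k) (F t)})"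
  proof -
    have "reduce_down i {Gr n i c} = reduce_down (Suc k) (reduce_layer i {Gr n i c})"
      unfolding i_def by (rule rd_Suc) simp
    also have "\<dots> = (\<Union>t\<in>{1..c i}. reduce_down (Suc k) {Gr n (Suc k) (F t)})"
      unfolding rl by (subst reduce_down_distrib) auto
    finally show ?thesis .
  qed
  have IH: "finite (reduce_down (Suc k) {Gr n (Suc k) (F t)}) \<and>
   card (reduce_down (Suc k) {Gr n (Suc k) (F t)}) = Nf k (c i + 2 - t) \<and>
   (\<forall>H \<in> reduce_down (Suc k) {Gr n (Suc k) (F t)}. \<forall>j. Suc k < j \<and> j \<le> n \<longrightarrow> count H (j, n+1) = F t j)"
    if t: "t \<in> {1..c i}" for t
  proof -
    have a1: "Suc k \<le> n" using i unfolding i_def by simp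
    have a2: "1 \<le> F t (Suc k)" using t unfolding F_def i_def by auto
    have a3: "\<forall>j. 1 \<le> j \<and> j \<le> k \<longrightarrow> F t j = 1" unfolding F_def i_def using Suc.prems by auto
    have "F t (Suc k) = c i + 2 - t" unfolding F_def i_def using ck by simp
    note e = this
    show ?thesis using Suc.IH[OF a1 a2 a3] unfolding e .
  qed
  have disj: "reduce_down (Suc k) {Gr n (Suc k) (F t)} \<inter> reduce_down (Suc k) {Gr n (Suc k) (F t')} = {}"
    if "t \<in> {1..c i}" "t' \<in> {1..c i}" "t \<noteq> t'" for t t'
  proof (rule ccontr)
    assume "reduce_down (Suc k) {Gr n (Suc k) (F t)} \<inter> reduce_down (Suc k) {Gr n (Suc k) (F t')} \<noteq> {}"
    then obtain H where H: "H \<in> reduce_down (Suc k) {Gr n (Suc k) (F t)}" "H \<in> reduce_down (Suc k) {Gr n (Suc k) (F t')}" by blast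
    have "Suc k < i" "i \<le> n" using i unfolding i_def by auto
    then have "count H (i, n+1) = F t i" "count H (i, n+1) = F t' i"
      using IH[OF that(1)] IH[OF that(2)] H by blast+
    then show False using that(3) unfolding F_def i_def by simp
  qed
  have fin: "finite (reduce_down i {Gr n i c})" unfolding rd using IH by auto
  have "card (reduce_down i {Gr n i c}) = (\<Sum>t\<in>{1..c i}. card (reduce_down (Suc k) {Gr n (Suc k) (F t)}))"
    unfolding rd by (rule card_UN_disjoint) (use IH disj in auto)
  also have "\<dots> = (\<Sum>t\<in>{1..c i}. Nf k (c i + 2 - t))" using IH by simp
  also have "\<dots> = (\<Sum>s\<in>{2..c i + 1}. Nf k s)"
    by (rule sum.reindex_bij_witness[where i="\<lambda>s. c i + 2 - s" and j="\<lambda>t. c i + 2 - t"]) auto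
  also have "\<dots> = Nf (Suc k) (c i)" by (simp add: Nf.simps(2))
  finally have cd: "card (reduce_down i {Gr n i c}) = Nf (Suc k) (c i)" .
  have inv: "\<forall>H \<in> reduce_down i {Gr n i c}. \<forall>j. i < j \<and> j \<le> n \<longrightarrow> count H (j, n+1) = c j"
  proof (intro ballI allI impI)
    fix H j assume H: "H \<in> reduce_down i {Gr n i c}" and j: "i < j \<and> j \<le> n"
    then obtain t where t: "t \<in> {1..c i}" "H \<in> reduce_down (Suc k) {Gr n (Suc k) (F t)}" unfolding rd by blast
    have "count H (j, n+1) = F t j" using IH[OF t(1)] t(2) j unfolding i_def by auto
    then show "count H (j, n+1) = c j" using j unfolding F_def i_def by simp
  qed
  show ?case using fin cd inv unfolding i_def by simp
qed



lemma count_star2: "count (mset (map (\<lambda>i. (i, m)) [1..<n + 1])) (a,b) = (if b = m \<and> 1 \<le> a \<and> a \<le> n then 1 else 0)"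
proof -
  have d: "distinct (map (\<lambda>i. (i, m)) [1..<n + 1])" by (simp add: distinct_map inj_on_def)
  show ?thesis using d[unfolded distinct_count_atmost_1] by auto
qed

lemma Pi_Gr: "Pi_graph n = Gr n n (\<lambda>j. if j = n then 2 else 1)"
  unfolding multiset_eq_iff
proof
  fix e :: "nat \<times> nat"
  obtain a b where e: "e = (a,b)" by fastforce
  show "count (Pi_graph n) e = count (Gr n n (\<lambda>j. if j = n then 2 else 1)) e"
    unfolding e Pi_graph_def count_union count_path count_star2 count_Gr by auto
qed

theorem corollary6p3:
  fixes n :: nat and a :: "nat \<Rightarrow> int"
  assumes "n \<ge> 1"
    and "\<forall>i \<in> {1..n}. a i > 0"
  shows "real (card (canonical_leaf_graphs n (Pi_graph n))) = real ((2 * n) choose n) / real (n + 1)"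
proof -
  obtain k where k: "n = Suc k" using assms(1) by (cases n) auto
  define c0 where "c0 = (\<lambda>j. if j = n then 2 else (1::nat))"
  have m: "card (reduce_down (Suc k) {Gr n (Suc k) c0}) = Nf k (c0 (Suc k))"
    using main_ind[of k n c0] unfolding c0_def k by auto
  have "card (canonical_leaf_graphs n (Pi_graph n)) = Nf (n-1) 2"
    using m unfolding canonical_leaf_graphs_def Pi_Gr c0_def k by simp
  then show ?thesis using Nf_catalan[OF assms(1)] by simp
qed

end
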